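(* Let $C$ and $D$ be reflexive symmetric cycles of lengths $m$ and $n$ respectively, with $4 \leq n \leq m$. For an integer $w$, let $\mathrm{Hom}_w(C,D)$ be the subgraph of $\mathrm{Hom}(C,D)$ induced by the homomorphisms of wind $w$. Then $\mathrm{Hom}_w(C,D)$ consists of (1) a single component if $0 \leq |w| < m/n$; (2) $n$ isolated vertices if $0 < |w| = m/n$; and $\mathrm{Hom}_w(C,D)$ is empty if $m/n < |w|$.
   Context: A digraph is a binary relation $\to$ on a finite vertex set; $uv$ is an arc if $u \to v$, the arc $uu$ is a loop, and a digraph is reflexive if every vertex has a loop. A cycle of length $m\ge 3$ is written $C = c_0c_1\dots c_{m-1}c_0$ (indices mod $m$), its edges being the pairs $c_ic_{i+1}$; it is symmetric if $c_i \to c_{i+1}$ and $c_{i+1}\to c_i$ for every $i$. The cycle $D$ of length $n$ is written $D=(0)(1)\dots(n-1)(0)$, its vertices being the integers mod $n$. A homomorphism $\phi: C \to D$ is a map on vertices with $u \to v$ implying $\phi(u)\to\phi(v)$. $\mathrm{Hom}(C,D)$ is the digraph whose vertices are the homomorphisms $C\to D$, with $\phi \to \phi'$ iff for all $u \to v$ in $C$, $\phi(u) \to \phi'(v)$; components are components of its underlying graph (two maps adjacent if $\phi\to\phi'$ or $\phi'\to\phi$). Under $\phi$, the edge $c_ic_{i+1}$ is increasing, stationary or decreasing according as $\phi(c_{i+1}) - \phi(c_i)$ is $1$, $0$ or $-1$ (mod $n$). The increase of $\phi$ is the number of increasing edges minus the number of decreasing edges, and the wind of $\phi$ is its increase divided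 by $n$. *)

theory Defs
  imports Complex_Main "HOL-Library.FuncSet"
begin

text \<open>The cycle of length k has vertex set {0..<k} (the integers mod k).
  Reflexive symmetric cycle: u is joined to v iff v = u, v = u+1 or u = v+1 (mod k).\<close>
definition cyc_arc :: "nat \<Rightarrow> nat \<Rightarrow> nat \<Rightarrow> bool" where
  "cyc_arc k u v \<longleftrightarrow> v = u \<or> v = (u + 1) mod k \<or> u = (v + 1) mod k"

definition homs :: "nat \<Rightarrow> nat \<Rightarrow> (nat \<Rightarrow> nat) set" where
  "homs m n = {\<phi> \<in> {0..<m} \<rightarrow>\<^sub>E {0..<n}.
      \<forall>u<m. \<forall>v<m. cyc_arc m u v \<longrightarrow> cyc_arc n (\<phi> u) (\<phi> v)}"

definition hom_arc :: "nat \<Rightarrow> nat \<Rightarrow> (nat \<Rightarrow> nat) \<Rightarrow> (nat \<Rightarrow> nat) \<Rightarrow> bool" where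
  "hom_arc m n \<phi> \<psi> \<longleftrightarrow> (\<forall>u<m. \<forall>v<m. cyc_arc m u v \<longrightarrow> cyc_arc n (\<phi> u) (\<psi> v))"

definition edge_step :: "nat \<Rightarrow> nat \<Rightarrow> nat \<Rightarrow> int" where
  "edge_step n a b = (if b = (a + 1) mod n then 1 else if a = (b + 1) mod n then -1 else 0)"

definition increase :: "nat \<Rightarrow> nat \<Rightarrow> (nat \<Rightarrow> nat) \<Rightarrow> int" where
  "increase m n \<phi> = (\<Sum>i<m. edge_step n (\<phi> i) (\<phi> ((i + 1) mod m)))"

definition wind :: "nat \<Rightarrow> nat \<Rightarrow> (nat \<Rightarrow> nat) \<Rightarrow> real" where
  "wind m n \<phi> = real_of_int (increase m n \<phi>) / real n"

definition homs_w :: "nat \<Rightarrow> nat \<Rightarrow> int \<Rightarrow> (nat \<Rightarrow> nat) set" where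
  "homs_w m n w = {\<phi> \<in> homs m n. wind m n \<phi> = real_of_int w}"

definition und_edges :: "'a set \<Rightarrow> ('a \<Rightarrow> 'a \<Rightarrow> bool) \<Rightarrow> ('a \<times> 'a) set" where
  "und_edges V R = {(x, y). x \<in> V \<and> y \<in> V \<and> (R x y \<or> R y x)}"

definition components :: "'a set \<Rightarrow> ('a \<Rightarrow> 'a \<Rightarrow> bool) \<Rightarrow> 'a set set" where
  "components V R = {(und_edges V R)\<^sup>* `` {x} | x. x \<in> V}"

end

theory Submission
  imports Defs
begin


definition pr :: "nat \<Rightarrow> int \<Rightarrow> nat" where
  "pr n a = nat (a mod int n)"

lemma int_pr: "0 < n \<Longrightarrow> int (pr n a) = a mod int n"
  by (simp add: pr_def)

lemma pr_lt: "0 < n \<Longrightarrow> pr n a < n"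
  unfolding pr_def by (simp add: nat_less_iff)

lemma pr_of_nat: "x < n \<Longrightarrow> pr n (int x) = x"
  unfolding pr_def by (simp add: zmod_int)

lemma pr_eq_iff: "0 < n \<Longrightarrow> pr n a = pr n b \<longleftrightarrow> a mod int n = b mod int n"
  by (metis int_pr of_nat_eq_iff)

lemma pr_suc: "0 < n \<Longrightarrow> (pr n a + 1) mod n = pr n (a + 1)"
proof -
  assume n: "0 < n"
  have "int ((pr n a + 1) mod n) = (a mod int n + 1) mod int n"
    using n by (simp add: int_pr zmod_int[symmetric] of_nat_mod add.commute)
  also have "\<dots> = (a + 1) mod int n" by (simp add: mod_add_left_eq)
  finally show ?thesis using n by (metis int_pr of_nat_eq_iff)
qed

lemma L1: assumes "0 < n" "\<bar>a - b\<bar> \<le> 1" shows "cyc_arc n (pr n a) (pr n b)"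
proof -
  have "b = a \<or> b = a + 1 \<or> a = b + 1" using assms by arith
  then show ?thesis using pr_suc[OF assms(1)] unfolding cyc_arc_def by auto
qed

lemma L3: assumes "3 \<le> n" "\<bar>b - a\<bar> \<le> 1" shows "edge_step n (pr n a) (pr n b) = b - a"
proof -
  have n: "0 < n" using assms by simp
  have nd2: "\<not> int n dvd 2" using assms by (auto dest: zdvd_imp_le)
  have "b = a \<or> b = a + 1 \<or> a = b + 1" using assms by arith
  moreover
  { assume "b = a"
    then have ?thesis using pr_suc[OF n] unfolding edge_step_def
      apply (simp add: pr_eq_iff[OF n])
      using nd2 by (metis add.commute add_diff_cancel_left' diff_add_cancel mod_eq_dvd_iff one_add_one zdvd1_eq
          assms(1) not_less_eq_eq numeral_3_eq_3 of_nat_le_iff dvd_minus_iff)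
  }
  moreover
  { assume "b = a + 1"
    then have ?thesis using pr_suc[OF n] unfolding edge_step_def by simp }
  moreover
  { assume ab: "a = b + 1"
    have "pr n b \<noteq> (pr n a + 1) mod n"
    proof
      assume "pr n b = (pr n a + 1) mod n"
      then have "b mod int n = (b + 2) mod int n" using pr_suc[OF n] ab pr_eq_iff[OF n] by (simp add: add.assoc)
      then have "int n dvd b - (b + 2)" using mod_eq_dvd_iff by blast
      then show False using nd2 by simp
    qed
    then have ?thesis using pr_suc[OF n] ab unfolding edge_step_def by simp }
  ultimately show ?thesis by blast
qed

lemma step_lemma: assumes "a < n" "b < n" "cyc_arc n a b"
  shows "(int a + edge_step n a b) mod int n = int b"
proof (cases "b = (a + 1) mod n")
  case True
  then show ?thesis unfolding edge_step_def by (simp add: of_nat_mod add.commute)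
next
  case F1: False
  show ?thesis
  proof (cases "a = (b + 1) mod n")
    case True
    then have "int a = (int b + 1) mod int n" by (simp add: of_nat_mod add.commute)
    then have "(int a - 1) mod int n = (int b + 1 - 1) mod int n" by (simp add: mod_diff_left_eq)
    then show ?thesis using F1 True assms unfolding edge_step_def by simp
  next
    case False
    then have "b = a" using F1 assms(3) unfolding cyc_arc_def by auto
    then show ?thesis using F1 False assms unfolding edge_step_def by simp
  qed
qed

definition good :: "nat \<Rightarrow> int \<Rightarrow> (int \<Rightarrow> int) \<Rightarrow> bool" where
  "good m K f \<longleftrightarrow> (\<forall>i. f (i + int m) = f i + K) \<and> (\<forall>i. \<bar>f (i + 1) - f i\<bar> \<le> 1)"

definition proj :: "nat \<Rightarrow> nat \<Rightarrow> (int \<Rightarrow> int) \<Rightarrow> nat \<Rightarrow> nat" where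
  "proj m n f = (\<lambda>i. if i < m then pr n (f (int i)) else undefined)"

lemma good_step: "good m K f \<Longrightarrow> \<bar>f (i + 1) - f i\<bar> \<le> 1"
  by (simp add: good_def)

lemma per_nat: assumes "good m K f" shows "f (i + int k * int m) = f i + int k * K"
proof (induction k)
  case 0 then show ?case by simp
next
  case (Suc k)
  have "f (i + int (Suc k) * int m) = f ((i + int k * int m) + int m)" by (simp add: algebra_simps)
  also have "\<dots> = f (i + int k * int m) + K" using assms by (simp add: good_def)
  finally show ?case using Suc by (simp add: algebra_simps)
qed

lemma per: assumes "good m K f" shows "f (i + k * int m) = f i + k * K"
proof (cases "0 \<le> k")
  case True
  then show ?thesis using per_nat[OF assms, of i "nat k"] by simp
next
  case False
  define j where "j = nat (- k)"
  have k: "k = - int j" using False j_def by simp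
  have "f i = f ((i + k * int m) + int j * int m)" using k by (simp add: algebra_simps)
  also have "\<dots> = f (i + k * int m) + int j * K" using per_nat[OF assms] by blast
  finally show ?thesis using k by simp
qed

lemma per_mod: assumes "good m K f" shows "f (i mod int m) = f i - (i div int m) * K"
proof -
  have "i mod int m = i + (- (i div int m)) * int m" by (simp add: minus_div_mult_eq_mod[symmetric] algebra_simps)
  then show ?thesis using per[OF assms, of i "- (i div int m)"] by simp
qed

lemma pr_per: assumes "good m K f" "0 < n" "int n dvd K"
  shows "pr n (f (i mod int m)) = pr n (f i)"
  unfolding pr_eq_iff[OF assms(2)] per_mod[OF assms(1)] mod_eq_dvd_iff
  using assms(3) by simp

lemma proj_suc: assumes "good m K f" "0 < n" "int n dvd K" "0 < m"
  shows "proj m n f ((u + 1) mod m) = pr n (f (int u + 1))"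
proof -
  have "int ((u + 1) mod m) = (int u + 1) mod int m" by (simp add: of_nat_mod add.commute)
  then show ?thesis unfolding proj_def using pr_per[OF assms(1-3)] assms(4) by simp
qed

lemma arc_lemma:
  assumes f: "good m K f" and g: "good m K g" and "0 < m" "0 < n" "int n dvd K"
    and c1: "\<And>i. \<bar>g i - f i\<bar> \<le> 1" and c2: "\<And>i. \<bar>g (i + 1) - f i\<bar> \<le> 1"
    and c3: "\<And>i. \<bar>g i - f (i + 1)\<bar> \<le> 1"
  shows "hom_arc m n (proj m n f) (proj m n g)"
  unfolding hom_arc_def
proof (intro allI impI)
  fix u v assume u: "u < m" and v: "v < m" and a: "cyc_arc m u v"
  consider "v = u" | "v = (u + 1) mod m" | "u = (v + 1) mod m" using a unfolding cyc_arc_def by blast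
  then show "cyc_arc n (proj m n f u) (proj m n g v)"
  proof cases
    case 1
    then show ?thesis using u c1[of "int u"] L1[OF assms(4)] unfolding proj_def by (simp add: abs_minus_commute)
  next
    case 2
    then show ?thesis using u proj_suc[OF g assms(4,5,3)] c2[of "int u"] L1[OF assms(4)]
      unfolding proj_def by (simp add: abs_minus_commute)
  next
    case 3
    then show ?thesis using v proj_suc[OF f assms(4,5,3)] c3[of "int v"] L1[OF assms(4)]
      unfolding proj_def by (simp add: abs_minus_commute)
  qed
qed

lemma proj_homs_w:
  assumes f: "good m K f" and K: "K = w * int n" and n: "3 \<le> n" and m: "0 < m"
  shows "proj m n f \<in> homs_w m n w"
proof -
  have n0: "0 < n" using n by simp
  have dv: "int n dvd K" using K by simp
  have hom: "hom_arc m n (proj m n f) (proj m n f)"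
    by (rule arc_lemma[OF f f m n0 dv]) (use good_step[OF f] in \<open>auto simp: abs_minus_commute\<close>)
  have pie: "proj m n f \<in> {0..<m} \<rightarrow>\<^sub>E {0..<n}"
    unfolding proj_def using pr_lt[OF n0] by auto
  have "increase m n (proj m n f) = (\<Sum>i<m. f (int (Suc i)) - f (int i))"
    unfolding increase_def
  proof (rule sum.cong)
    fix i assume "i \<in> {..<m}"
    then have "proj m n f i = pr n (f (int i))" unfolding proj_def by simp
    then show "edge_step n (proj m n f i) (proj m n f ((i + 1) mod m)) = f (int (Suc i)) - f (int i)"
      using proj_suc[OF f n0 dv m, of i] L3[OF n good_step[OF f, of "int i"]] by (simp add: add.commute)
  qed simp
  also have "\<dots> = f (int m) - f 0" using sum_lessThan_telescope[of "\<lambda>i. f (int i)" m] by simp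
  also have "\<dots> = K" using f unfolding good_def by (metis add.left_neutral add_diff_cancel_left')
  finally have inc: "increase m n (proj m n f) = K" .
  show ?thesis unfolding homs_w_def homs_def wind_def
    using hom pie inc K n0 unfolding hom_arc_def by simp
qed

lemma homs_vals: "\<phi> \<in> homs m n \<Longrightarrow> i < m \<Longrightarrow> \<phi> i < n"
  unfolding homs_def by auto

lemma homs_undef: "\<phi> \<in> homs m n \<Longrightarrow> \<not> i < m \<Longrightarrow> \<phi> i = undefined"
  unfolding homs_def by (auto simp: PiE_def extensional_def)

lemma homs_arc: "\<phi> \<in> homs m n \<Longrightarrow> u < m \<Longrightarrow> v < m \<Longrightarrow> cyc_arc m u v \<Longrightarrow> cyc_arc n (\<phi> u) (\<phi> v)"
  unfolding homs_def by auto

lemma edge_step_abs: "\<bar>edge_step n a b\<bar> \<le> 1"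
  unfolding edge_step_def by auto

lemma lift_exists:
  assumes phi: "\<phi> \<in> homs m n" and m: "0 < m"
  shows "\<exists>f. good m (increase m n \<phi>) f \<and> proj m n f = \<phi>"
proof -
  define st where "st k = edge_step n (\<phi> k) (\<phi> ((k + 1) mod m))" for k
  define F where "F r = int (\<phi> 0) + (\<Sum>k<r. st k)" for r
  define K where "K = increase m n \<phi>"
  define f where "f i = F (nat (i mod int m)) + (i div int m) * K" for i
  have FS: "F (Suc r) = F r + st r" for r unfolding F_def by simp
  have Fm: "F m = F 0 + K" unfolding F_def K_def increase_def st_def by simp
  have per: "f (i + int m) = f i + K" for i unfolding f_def using m by (simp add: algebra_simps)
  have stp: "\<bar>f (i + 1) - f i\<bar> \<le> 1" for i
  proof -
    define r where "r = nat (i mod int m)"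
    define q where "q = i div int m"
    have r: "int r = i mod int m" "r < m" using m unfolding r_def by (auto simp: nat_less_iff)
    have i: "i = int r + q * int m" using r unfolding q_def by simp
    show ?thesis
    proof (cases "r + 1 < m")
      case True
      have e: "i + 1 = (int r + 1) + q * int m" using i by simp
      have "(i + 1) mod int m = (int r + 1) mod int m" unfolding e by (rule mod_mult_self1)
      then have 1: "(i + 1) mod int m = int (r + 1)" using True by simp
      have "(i + 1) div int m = q + (int r + 1) div int m" unfolding e using m by simp
      then have 2: "(i + 1) div int m = q" using True by simp
      have "nat (int (r + 1)) = Suc r" by simp
      then have "f (i + 1) = F (Suc r) + q * K" unfolding f_def 1 2 by presburger
      moreover have "f i = F r + q * K" unfolding f_def r_def q_def by simp
      ultimately have "f (i + 1) - f i = F (Suc r) - F r" by simp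
      then have "f (i + 1) - f i = st r" using FS by simp
      then show ?thesis using edge_step_abs st_def by simp
    next
      case False
      then have rm: "r = m - 1" "Suc (m - 1) = m" using r m by auto
      have "i + 1 = 0 + (q + 1) * int m" using i rm by (simp add: algebra_simps of_nat_diff)
      then have "(i + 1) mod int m = 0" "(i + 1) div int m = q + 1"
        using m by simp_all
      then have "f (i + 1) = F 0 + (q + 1) * K" unfolding f_def q_def by simp
      moreover have "f i = F (m - 1) + q * K" unfolding f_def r_def[symmetric] q_def[symmetric] rm(1) by simp
      ultimately have "f (i + 1) - f i = F m - F (m - 1)" using Fm by (simp add: algebra_simps)
      also have "\<dots> = st (m - 1)" using FS[of "m - 1"] rm by simp
      finally show ?thesis using edge_step_abs st_def by simp
    qed
  qed
  have Fmod: "r < m \<Longrightarrow> F r mod int n = int (\<phi> r)" for r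
  proof (induction r)
    case 0
    then show ?case using homs_vals[OF phi m] unfolding F_def by (simp add: zmod_int)
  next
    case (Suc r)
    have a: "cyc_arc n (\<phi> r) (\<phi> ((r + 1) mod m))"
      using homs_arc[OF phi, of r "(r + 1) mod m"] Suc.prems m unfolding cyc_arc_def by auto
    have "F (Suc r) mod int n = (F r mod int n + st r) mod int n" using FS by (simp add: mod_add_left_eq)
    also have "\<dots> = (int (\<phi> r) + st r) mod int n" using Suc by simp
    also have "\<dots> = int (\<phi> ((r + 1) mod m))" unfolding st_def
      by (rule step_lemma[OF homs_vals[OF phi] homs_vals[OF phi] a]) (use Suc.prems m in auto)
    finally show ?case using Suc.prems by simp
  qed
  have "proj m n f = \<phi>"
  proof
    fix i
    show "proj m n f i = \<phi> i"
    proof (cases "i < m")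
      case True
      then have "f (int i) = F i" unfolding f_def by (simp add: zmod_int)
      then show ?thesis using True Fmod[OF True] unfolding proj_def pr_def by simp
    next
      case False
      then show ?thesis using homs_undef[OF phi] unfolding proj_def by simp
    qed
  qed
  moreover have "good m K f" unfolding good_def using per stp by blast
  ultimately show ?thesis unfolding K_def by blast
qed



definition raise :: "nat \<Rightarrow> int \<Rightarrow> (int \<Rightarrow> int) \<Rightarrow> int \<Rightarrow> int" where
  "raise m j f = (\<lambda>i. if i mod int m = j mod int m then f i + 1 else f i)"

lemma per_transfer: assumes "good m K f" "i mod int m = j mod int m"
  shows "f (i + t) - f i = f (j + t) - f j"
proof -
  define k where "k = i div int m - j div int m"
  have e1: "i = i div int m * int m + i mod int m" "j = j div int m * int m + j mod int m" by simp_all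
  have "i - j = i div int m * int m - j div int m * int m" using e1 assms(2) by linarith
  then have i: "i = j + k * int m" unfolding k_def left_diff_distrib by linarith
  have "f (i + t) = f ((j + t) + k * int m)" using i by (simp add: algebra_simps)
  also have "\<dots> = f (j + t) + k * K" using per[OF assms(1)] by blast
  finally have 1: "f (i + t) = f (j + t) + k * K" .
  have "f i = f j + k * K" using i per[OF assms(1)] by blast
  then show ?thesis using 1 by simp
qed

lemma diff_per: assumes "good m K f" "good m K g"
  shows "g (i mod int m) - f (i mod int m) = g i - f i"
  using per_mod[OF assms(1)] per_mod[OF assms(2)] by simp

lemma raise_props:
  assumes f: "good m K f" and m: "2 \<le> m" and l: "f j \<le> f (j - 1)" and r: "f j \<le> f (j + 1)"
  shows "good m K (raise m j f)" "\<And>i. \<bar>raise m j f i - f i\<bar> \<le> 1"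
    "\<And>i. \<bar>raise m j f (i + 1) - f i\<bar> \<le> 1" "\<And>i. \<bar>raise m j f i - f (i + 1)\<bar> \<le> 1"
proof -
  have nb: "\<not> (i mod int m = j mod int m \<and> (i + 1) mod int m = j mod int m)" for i
  proof
    assume "i mod int m = j mod int m \<and> (i + 1) mod int m = j mod int m"
    then have "(i + 1) mod int m = i mod int m" by simp
    then have "int m dvd (i + 1) - i" using mod_eq_dvd_iff by blast
    then show False using m by (auto dest: zdvd_imp_le)
  qed
  have A: "i mod int m = j mod int m \<Longrightarrow> 0 \<le> f (i + 1) - f i \<and> f (i + 1) - f i \<le> 1" for i
    using per_transfer[OF f, of i j 1] r good_step[OF f, of j] by (simp add: abs_le_iff)
  have B: "(i + 1) mod int m = j mod int m \<Longrightarrow> -1 \<le> f (i + 1) - f i \<and> f (i + 1) - f i \<le> 0" for i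
    using per_transfer[OF f, of "i + 1" j "-1"] l good_step[OF f, of "j - 1"] by (simp add: abs_le_iff)
  have st: "\<bar>f (i + 1) - f i\<bar> \<le> 1" for i using good_step[OF f] .
  show "good m K (raise m j f)" unfolding good_def
  proof (intro conjI allI)
    fix i show "raise m j f (i + int m) = raise m j f i + K"
      unfolding raise_def using f unfolding good_def by simp
  next
    fix i show "\<bar>raise m j f (i + 1) - raise m j f i\<bar> \<le> 1"
      unfolding raise_def using nb[of i] A[of i] B[of i] st[of i] by (simp add: abs_le_iff)
  qed
  show "\<And>i. \<bar>raise m j f i - f i\<bar> \<le> 1" unfolding raise_def by simp
  show "\<bar>raise m j f (i + 1) - f i\<bar> \<le> 1" for i
    unfolding raise_def using B[of i] st[of i] by (simp add: abs_le_iff)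
  show "\<bar>raise m j f i - f (i + 1)\<bar> \<le> 1" for i
    unfolding raise_def using A[of i] st[of i] by (simp add: abs_le_iff)
qed

lemma mult_gt_neg: "0 < (m::int) \<Longrightarrow> - m < m * x \<Longrightarrow> 0 \<le> x"
proof (rule ccontr)
  assume "0 < m" "- m < m * x" "\<not> 0 \<le> x"
  then have "m * x \<le> m * (-1)" by (intro mult_left_mono) auto
  then show False using \<open>- m < m * x\<close> by simp
qed

lemma exists_min:
  assumes f: "good m K f" and g: "good m K g" and K: "\<bar>K\<bar> < int m" and m: "0 < m"
    and ex: "\<exists>i\<in>{0..<int m}. f i < g i"
  shows "\<exists>j. 0 \<le> j \<and> j < int m \<and> f j < g j \<and> f j \<le> f (j - 1) \<and> f j \<le> f (j + 1)"
proof -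
  define h where "h i = int m * f i - K * i" for i
  define D where "D = {i\<in>{0..<int m}. f i < g i}"
  have hper: "h (i mod int m) = h i" for i
  proof -
    have "K * i = K * (i mod int m + int m * (i div int m))" by simp
    also have "\<dots> = K * (i mod int m) + K * (int m * (i div int m))" by (rule distrib_left)
    finally show ?thesis unfolding h_def per_mod[OF f] by (simp add: algebra_simps)
  qed
  have fD: "finite D" "D \<noteq> {}" using ex unfolding D_def by (auto intro: finite_subset[of _ "{0..<int m}"])
  define M where "M = Min (h ` D)"
  have "M \<in> h ` D" unfolding M_def using fD by simp
  then obtain j where j: "j \<in> D" "h j = M" by auto
  have jmin: "i \<in> D \<Longrightarrow> h j \<le> h i" for i using fD j unfolding M_def by simp
  have Dmod: "f t < g t \<Longrightarrow> t mod int m \<in> D" for t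
    unfolding D_def using diff_per[OF f g, of t] m by simp
  have right: "f j \<le> f (j + 1)"
  proof (cases "f (j + 1) < g (j + 1)")
    case True
    then have "h j \<le> h (j + 1)" using jmin[OF Dmod[OF True]] hper by simp
    then have "K \<le> int m * (f (j + 1) - f j)" unfolding h_def by (simp add: algebra_simps)
    then have "- int m < int m * (f (j + 1) - f j)" using K by linarith
    then have "0 \<le> f (j + 1) - f j" by (rule mult_gt_neg[rotated]) (use m in simp)
    then show ?thesis by simp
  next
    case False
    then show ?thesis using good_step[OF g, of j] j(1) unfolding D_def by auto
  qed
  have left: "f j \<le> f (j - 1)"
  proof (cases "f (j - 1) < g (j - 1)")
    case True
    then have "h j \<le> h (j - 1)" using jmin[OF Dmod[OF True]] hper by simp
    then have "- K \<le> int m * (f (j - 1) - f j)" unfolding h_def by (simp add: algebra_simps)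
    then have "- int m < int m * (f (j - 1) - f j)" using K by linarith
    then have "0 \<le> f (j - 1) - f j" by (rule mult_gt_neg[rotated]) (use m in simp)
    then show ?thesis by simp
  next
    case False
    then show ?thesis using good_step[OF g, of "j - 1"] j(1) unfolding D_def by auto
  qed
  show ?thesis using j(1) left right unfolding D_def by auto
qed



lemma connect:
  assumes n: "3 \<le> n" and m: "2 \<le> m" and K: "\<bar>K\<bar> < int m" and Kw: "K = w * int n" and g: "good m K g"
  shows "nat (\<Sum>i<m. g (int i) - f (int i)) = \<mu> \<Longrightarrow> good m K f \<Longrightarrow> (\<forall>i. f i \<le> g i) \<Longrightarrow>
    (proj m n f, proj m n g) \<in> (und_edges (homs_w m n w) (hom_arc m n))\<^sup>*"
proof (induction \<mu> arbitrary: f rule: less_induct)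
  case (less \<mu> f)
  have f: "good m K f" by fact
  have m0: "0 < m" using m by simp
  have n0: "0 < n" using n by simp
  have dv: "int n dvd K" using Kw by simp
  show ?case
  proof (cases "\<exists>i\<in>{0..<int m}. f i < g i")
    case False
    have "proj m n f = proj m n g"
    proof
      fix i show "proj m n f i = proj m n g i"
      proof (cases "i < m")
        case True
        have "int i \<in> {0..<int m}" using True by simp
        then have "g (int i) \<le> f (int i)" using False by (meson not_less)
        then have "f (int i) = g (int i)" using less.prems(3) by (simp add: antisym)
        then show ?thesis unfolding proj_def by simp
      qed (simp add: proj_def)
    qed
    then show ?thesis by simp
  next
    case True
    obtain j where j: "0 \<le> j" "j < int m" "f j < g j" "f j \<le> f (j - 1)" "f j \<le> f (j + 1)"
      using exists_min[OF f g K m0 True] by blast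
    define f' where "f' = raise m j f"
    note rp = raise_props[OF f m j(4) j(5), folded f'_def]
    have arc: "hom_arc m n (proj m n f) (proj m n f')"
      by (rule arc_lemma[OF f rp(1) m0 n0 dv rp(2-4)])
    have inS: "proj m n f \<in> homs_w m n w" "proj m n f' \<in> homs_w m n w"
      using proj_homs_w[OF f Kw n m0] proj_homs_w[OF rp(1) Kw n m0] by auto
    have edge: "(proj m n f, proj m n f') \<in> und_edges (homs_w m n w) (hom_arc m n)"
      unfolding und_edges_def using inS arc by auto
    have jm: "j mod int m = j" using j by simp
    have le: "\<forall>i. f' i \<le> g i"
    proof
      fix i
      show "f' i \<le> g i"
      proof (cases "i mod int m = j mod int m")
        case True
        have "g i - f i = g j - f j" using diff_per[OF f g, of i] diff_per[OF f g, of j] True by simp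
        then show ?thesis unfolding f'_def raise_def using True j(3) by simp
      next
        case False
        then show ?thesis unfolding f'_def raise_def using less.prems(3) by simp
      qed
    qed
    have f'i: "f' (int i) = f (int i) + (if i = nat j then 1 else 0)" if "i < m" for i
    proof -
      have "int i mod int m = int i" using that by simp
      then show ?thesis unfolding f'_def raise_def using jm j(1) by auto
    qed
    have "(\<Sum>i<m. g (int i) - f' (int i)) = (\<Sum>i<m. (g (int i) - f (int i)) - (if i = nat j then 1 else 0))"
      by (rule sum.cong) (auto simp: f'i)
    also have "\<dots> = (\<Sum>i<m. g (int i) - f (int i)) - (\<Sum>i<m. (if i = nat j then 1 else 0))"
      by (rule sum_subtractf)
    also have "(\<Sum>i<m. (if i = nat j then 1 else 0) :: int) = 1" using j by simp
    finally have s1: "(\<Sum>i<m. g (int i) - f' (int i)) = (\<Sum>i<m. g (int i) - f (int i)) - 1" .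
    have "g (int (nat j)) - f (int (nat j)) \<le> (\<Sum>i<m. g (int i) - f (int i))"
      by (rule member_le_sum) (use j less.prems(3) in auto)
    then have pos: "1 \<le> (\<Sum>i<m. g (int i) - f (int i))" using j by simp
    have lt: "nat (\<Sum>i<m. g (int i) - f' (int i)) < \<mu>" using s1 pos less.prems(1) by simp
    have "(proj m n f', proj m n g) \<in> (und_edges (homs_w m n w) (hom_arc m n))\<^sup>*"
      by (rule less.IH[OF lt refl rp(1) le])
    then show ?thesis by (rule converse_rtrancl_into_rtrancl[OF edge])
  qed
qed

lemma wind_eq: "0 < n \<Longrightarrow> wind m n \<phi> = real_of_int w \<longleftrightarrow> increase m n \<phi> = w * int n"
proof -
  assume n: "0 < n"
  have "wind m n \<phi> = real_of_int w \<longleftrightarrow> real_of_int (increase m n \<phi>) = real_of_int w * real n"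
    unfolding wind_def using n by (simp add: divide_eq_eq)
  also have "\<dots> \<longleftrightarrow> increase m n \<phi> = w * int n"
    by (metis of_int_eq_iff of_int_mult of_int_of_nat_eq)
  finally show ?thesis .
qed

lemma all_connected:
  assumes n: "3 \<le> n" and m: "2 \<le> m" and K: "\<bar>w * int n\<bar> < int m"
    and x: "x \<in> homs_w m n w" and y: "y \<in> homs_w m n w"
  shows "(x, y) \<in> (und_edges (homs_w m n w) (hom_arc m n))\<^sup>*"
proof -
  have n0: "0 < n" and m0: "0 < m" using n m by auto
  have xi: "x \<in> homs m n" "increase m n x = w * int n" using x wind_eq[OF n0] unfolding homs_w_def by auto
  have yi: "y \<in> homs m n" "increase m n y = w * int n" using y wind_eq[OF n0] unfolding homs_w_def by auto
  obtain f where f: "good m (w * int n) f" "proj m n f = x" using lift_exists[OF xi(1) m0] xi(2) by auto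
  obtain g where g: "good m (w * int n) g" "proj m n g = y" using lift_exists[OF yi(1) m0] yi(2) by auto
  define c where "c = (\<Sum>k<m. \<bar>f (int k) - g (int k)\<bar>)"
  define g' where "g' i = g i + int n * c" for i
  have g'good: "good m (w * int n) g'" using g(1) unfolding good_def g'_def by simp
  have "proj m n g' = proj m n g"
  proof
    fix i show "proj m n g' i = proj m n g i"
      unfolding proj_def g'_def using pr_eq_iff[OF n0] by simp
  qed
  then have pg': "proj m n g' = y" using g(2) by simp
  have c0: "0 \<le> c" unfolding c_def by (simp add: sum_nonneg)
  have fle: "\<forall>i. f i \<le> g' i"
  proof
    fix i
    define k where "k = nat (i mod int m)"
    have k: "int k = i mod int m" "k < m" using m0 unfolding k_def by (auto simp: nat_less_iff)
    have "f i - g i = f (int k) - g (int k)" using diff_per[OF g(1) f(1), of i] k by simp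
    also have "\<dots> \<le> c" unfolding c_def
      using member_le_sum[of k "{..<m}" "\<lambda>k. \<bar>f (int k) - g (int k)\<bar>"] k by simp
    also have "c \<le> int n * c" using c0 n0 by (simp add: mult_le_cancel_right1)
    finally show "f i \<le> g' i" unfolding g'_def by simp
  qed
  have "(proj m n f, proj m n g') \<in> (und_edges (homs_w m n w) (hom_arc m n))\<^sup>*"
    by (rule connect[OF n m K refl g'good refl f(1) fle])
  then show ?thesis using f(2) pg' by simp
qed

lemma comp_single:
  assumes ne: "S \<noteq> {}" and conn: "\<forall>x\<in>S. \<forall>y\<in>S. (x, y) \<in> (und_edges S R)\<^sup>*"
  shows "card (components S R) = 1"
proof -
  have "(und_edges S R)\<^sup>* `` {x} = S" if x: "x \<in> S" for x
  proof
    show "(und_edges S R)\<^sup>* `` {x} \<subseteq> S"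
    proof
      fix y assume "y \<in> (und_edges S R)\<^sup>* `` {x}"
      then have "(x, y) \<in> (und_edges S R)\<^sup>*" by simp
      then show "y \<in> S"
        by (induction rule: rtrancl_induct) (use x in \<open>auto simp: und_edges_def\<close>)
    qed
    show "S \<subseteq> (und_edges S R)\<^sup>* `` {x}" using conn x by auto
  qed
  then have "components S R = {S}" unfolding components_def using ne by auto
  then show ?thesis by simp
qed

lemma div_step_bound:
  assumes m: "0 < (m::int)" and K: "\<bar>K\<bar> < m"
  shows "\<bar>(a + K) div m - a div m\<bar> \<le> 1"
proof -
  define p where "p = a div m"
  define q where "q = (a + K) div m"
  have e1: "a = m * p + a mod m" "0 \<le> a mod m" "a mod m < m" unfolding p_def using m by simp_all
  have e2: "a + K = m * q + (a + K) mod m" "0 \<le> (a + K) mod m" "(a + K) mod m < m"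
    unfolding q_def using m by simp_all
  have a1: "m * p \<le> a" "a < m * p + m" using e1 by linarith+
  have b1: "m * q \<le> a + K" "a + K < m * q + m" using e2 by linarith+
  have u: "m * (q - p) < m * 2" using a1 b1 K by (simp add: right_diff_distrib)
  have l: "m * (-2) < m * (q - p)" using a1 b1 K by (simp add: right_diff_distrib)
  have "q - p < 2" using u m by (simp add: mult_less_cancel_left)
  moreover have "-2 < q - p" using l m mult_less_cancel_left_pos[of m "-2" "q - p"] by simp
  ultimately show ?thesis unfolding p_def q_def by simp
qed

lemma exists_hom:
  assumes n: "3 \<le> n" and m: "0 < m" and K: "\<bar>w * int n\<bar> < int m"
  shows "homs_w m n w \<noteq> {}"
proof -
  define K where "K = w * int n"
  define f where "f i = (i * K) div int m" for i
  have "good m K f" unfolding good_def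
  proof (intro conjI allI)
    fix i
    have "(i + int m) * K = i * K + K * int m" by (simp add: algebra_simps)
    then show "f (i + int m) = f i + K" unfolding f_def using m by simp
  next
    fix i
    have "(i + 1) * K = i * K + K" by (simp add: algebra_simps)
    then show "\<bar>f (i + 1) - f i\<bar> \<le> 1" unfolding f_def
      using div_step_bound[of "int m" K "i * K"] m K K_def by simp
  qed
  then show ?thesis using proj_homs_w[OF _ K_def n m] by blast
qed

lemma increase_bound: "\<bar>increase m n \<phi>\<bar> \<le> int m"
proof -
  have "\<bar>increase m n \<phi>\<bar> \<le> (\<Sum>i<m. \<bar>edge_step n (\<phi> i) (\<phi> ((i + 1) mod m))\<bar>)"
    unfolding increase_def by (rule sum_abs)
  also have "\<dots> \<le> (\<Sum>i<m. 1)" by (rule sum_mono) (rule edge_step_abs)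
  finally show ?thesis by simp
qed

lemma suc_mod_if: "(x::nat) < n \<Longrightarrow> (x + 1) mod n = (if x + 1 = n then 0 else x + 1)"
proof (cases "x + 1 = n")
  case False
  assume "x < n"
  then have "x + 1 < n" using False by simp
  then show ?thesis using False by simp
qed simp

definition nxt :: "nat \<Rightarrow> nat \<Rightarrow> nat" where "nxt n x = (if x + 1 = n then 0 else x + 1)"
definition prv :: "nat \<Rightarrow> nat \<Rightarrow> nat" where "prv n x = (if x = 0 then n - 1 else x - 1)"

lemma nxt_lt: "x < n \<Longrightarrow> nxt n x < n" unfolding nxt_def by auto
lemma prv_lt: "x < n \<Longrightarrow> prv n x < n" unfolding prv_def by auto
lemma nxt_prv: "x < n \<Longrightarrow> nxt n (prv n x) = x" unfolding nxt_def prv_def by auto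
lemma nxt_inj: "x < n \<Longrightarrow> y < n \<Longrightarrow> nxt n x = nxt n y \<Longrightarrow> x = y" unfolding nxt_def by (auto split: if_splits)
lemma nxt1: "2 \<le> n \<Longrightarrow> x < n \<Longrightarrow> nxt n x \<noteq> x" unfolding nxt_def by auto
lemma nxt2: "3 \<le> n \<Longrightarrow> x < n \<Longrightarrow> nxt n (nxt n x) \<noteq> x" unfolding nxt_def by auto
lemma nxt3: "4 \<le> n \<Longrightarrow> x < n \<Longrightarrow> nxt n (nxt n (nxt n x)) \<noteq> x" unfolding nxt_def by auto

lemma contra1: fixes c d n :: nat
  assumes n: "4 \<le> n" and c: "c < n" and d: "d < n" and cd: "c \<noteq> d"
  and B1: "d = c \<or> d = nxt n c \<or> c = nxt n d"
  and B2: "nxt n d = c \<or> nxt n d = nxt n c \<or> c = nxt n (nxt n d)"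
  and B3: "d = nxt n c \<or> d = nxt n (nxt n c) \<or> nxt n c = nxt n d"
  shows False
  using B1
proof (elim disjE)
  assume "d = nxt n c"
  then show False using B2 nxt1[of n d] nxt2[of n c] nxt3[of n c] n c d by auto
next
  assume "c = nxt n d"
  then show False using B3 nxt1[of n c] nxt2[of n d] nxt3[of n d] n c d by auto
qed (use cd in simp)

lemma contra2: fixes c d n :: nat
  assumes n: "4 \<le> n" and c: "c < n" and d: "d < n" and cd: "c \<noteq> d"
  and B1: "d = c \<or> d = nxt n c \<or> c = nxt n d"
  and B2: "prv n d = c \<or> prv n d = nxt n c \<or> c = nxt n (prv n d)"
  and B3: "d = prv n c \<or> d = nxt n (prv n c) \<or> prv n c = nxt n d"
  shows False
  using B1
proof (elim disjE)
  assume dc: "d = nxt n c"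
  show False using B3
  proof (elim disjE)
    assume "d = prv n c"
    then have "nxt n d = c" using nxt_prv c by simp
    then show False using dc nxt2[of n c] n c by simp
  next
    assume "d = nxt n (prv n c)" then show False using nxt_prv c cd by simp
  next
    assume "prv n c = nxt n d"
    then have "c = nxt n (nxt n d)" using nxt_prv[OF c] by metis
    then show False using dc nxt3[of n c] n c by simp
  qed
next
  assume cdd: "c = nxt n d"
  show False using B2
  proof (elim disjE)
    assume "prv n d = c"
    then have "d = nxt n c" using nxt_prv[OF d] by metis
    then show False using cdd nxt2[of n d] n d by simp
  next
    assume "prv n d = nxt n c"
    then have "d = nxt n (nxt n c)" using nxt_prv[OF d] by metis
    then show False using cdd nxt3[of n d] n d by simp
  next
    assume "c = nxt n (prv n d)" then show False using nxt_prv d cd by simp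
  qed
qed (use cd in simp)

lemma pr_plus1: "x < n \<Longrightarrow> pr n (int x + 1) = nxt n x"
  using pr_suc[of n "int x"] pr_of_nat[of x n] suc_mod_if[of x n] unfolding nxt_def by simp

lemma pr_minus1: assumes "x < n" shows "pr n (int x - 1) = prv n x"
proof (cases "x = 0")
  case True
  have "(-1::int) mod int n = int n - 1" using assms by (simp add: zmod_minus1)
  then show ?thesis using True assms unfolding pr_def prv_def by (simp add: nat_diff_distrib)
next
  case False
  then have "int x - 1 = int (x - 1)" by simp
  then show ?thesis using False assms pr_of_nat[of "x - 1" n] unfolding prv_def by simp
qed

lemma cyc_arc_if: "a < n \<Longrightarrow> b < n \<Longrightarrow> cyc_arc n a b \<longleftrightarrow> (b = a \<or> b = nxt n a \<or> a = nxt n b)"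
  unfolding cyc_arc_def nxt_def using suc_mod_if[of a n] suc_mod_if[of b n] by simp

lemma rigid:
  assumes n: "4 \<le> n" and m: "2 \<le> m" and w0: "w \<noteq> 0" and wm: "\<bar>w\<bar> * int n = int m"
  shows "card (homs_w m n w) = n \<and>
    (\<forall>\<phi>\<in>homs_w m n w. \<forall>\<psi>\<in>homs_w m n w. \<phi> \<noteq> \<psi> \<longrightarrow> \<not> hom_arc m n \<phi> \<psi>)"
proof -
  define s where "s = sgn w"
  have n0: "0 < n" and m0: "0 < m" and n3: "3 \<le> n" using n m by auto
  have ss: "s * s = 1" using w0 unfolding s_def by (auto simp: sgn_if)
  have s1: "s = 1 \<or> s = -1" using w0 unfolding s_def by (auto simp: sgn_if)
  have sm: "s * int m = w * int n" unfolding s_def wm[symmetric] by (simp add: sgn_mult_abs mult.assoc[symmetric])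
  define psi where "psi c = proj m n (\<lambda>i. int c + s * i)" for c :: nat
  have psiS: "psi c \<in> homs_w m n w" for c
  proof -
    have "good m (s * int m) (\<lambda>i. int c + s * i)" unfolding good_def using s1
      by (auto simp: algebra_simps)
    then show ?thesis unfolding psi_def using proj_homs_w[OF _ sm n3 m0] by blast
  qed
  have psi_val: "psi c i = pr n (int c + s * int i)" if "i < m" for c i
    using that unfolding psi_def proj_def by simp
  have psi0: "c < n \<Longrightarrow> psi c 0 = c" for c using psi_val[OF m0] pr_of_nat by simp
  have form: "\<phi> = psi (\<phi> 0)" if phi: "\<phi> \<in> homs_w m n w" for \<phi>
  proof -
    have ph: "\<phi> \<in> homs m n" "increase m n \<phi> = w * int n" using phi wind_eq[OF n0] unfolding homs_w_def by auto
    define e where "e i = edge_step n (\<phi> i) (\<phi> ((i + 1) mod m))" for i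
    have esum: "(\<Sum>i<m. e i) = s * int m" using ph(2) sm unfolding increase_def e_def by simp
    have "(\<Sum>i<m. 1 - s * e i) = int m - s * (\<Sum>i<m. e i)"
      by (simp add: sum_subtractf sum_distrib_left)
    also have "\<dots> = 0" using esum ss by (simp add: mult.assoc[symmetric])
    finally have z: "(\<Sum>i<m. 1 - s * e i) = 0" .
    have nn: "\<forall>i\<in>{..<m}. 0 \<le> 1 - s * e i"
    proof
      fix i
      have "\<bar>e i\<bar> \<le> 1" unfolding e_def by (rule edge_step_abs)
      then show "0 \<le> 1 - s * e i" using s1 by auto
    qed
    have eall: "e i = s" if "i < m" for i
    proof -
      have "1 - s * e i = 0" using z nn that sum_nonneg_eq_0_iff[of "{..<m}" "\<lambda>i. 1 - s * e i"] by simp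
      then show ?thesis using s1 by auto
    qed
    have val: "i < m \<Longrightarrow> int (\<phi> i) = (int (\<phi> 0) + s * int i) mod int n" for i
    proof (induction i)
      case 0
      then show ?case using homs_vals[OF ph(1) m0] by (simp add: zmod_int)
    next
      case (Suc i)
      have a: "cyc_arc n (\<phi> i) (\<phi> ((i + 1) mod m))"
        using homs_arc[OF ph(1), of i "(i + 1) mod m"] Suc.prems m0 unfolding cyc_arc_def by auto
      have "int (\<phi> (Suc i)) = int (\<phi> ((i + 1) mod m))" using Suc.prems by simp
      also have "\<dots> = (int (\<phi> i) + e i) mod int n" unfolding e_def
        by (rule step_lemma[OF homs_vals[OF ph(1)] homs_vals[OF ph(1)] a, symmetric]) (use Suc.prems m0 in auto)
      also have "\<dots> = ((int (\<phi> 0) + s * int i) mod int n + s) mod int n" using Suc eall[of i] by simp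
      also have "\<dots> = (int (\<phi> 0) + s * int i + s) mod int n" by (rule mod_add_left_eq)
      also have "\<dots> = (int (\<phi> 0) + s * int (Suc i)) mod int n" by (simp add: algebra_simps)
      finally show ?case .
    qed
    show ?thesis
    proof
      fix i show "\<phi> i = psi (\<phi> 0) i"
      proof (cases "i < m")
        case True
        have "int (psi (\<phi> 0) i) = (int (\<phi> 0) + s * int i) mod int n"
          using psi_val[OF True] int_pr[OF n0] by simp
        then show ?thesis using val[OF True] by simp
      next
        case False
        then show ?thesis using homs_undef[OF ph(1) False] unfolding psi_def proj_def by simp
      qed
    qed
  qed
  have Seq: "homs_w m n w = psi ` {0..<n}"
  proof
    show "homs_w m n w \<subseteq> psi ` {0..<n}"
    proof
      fix \<phi> assume phi: "\<phi> \<in> homs_w m n w"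
      have "\<phi> 0 < n" using homs_vals[of \<phi> m n 0] phi m0 unfolding homs_w_def by auto
      then show "\<phi> \<in> psi ` {0..<n}" using form[OF phi] by auto
    qed
    show "psi ` {0..<n} \<subseteq> homs_w m n w" using psiS by auto
  qed
  have inj: "inj_on psi {0..<n}"
    by (rule inj_onI) (metis atLeastLessThan_iff psi0)
  have card: "card (homs_w m n w) = n" unfolding Seq using card_image[OF inj] by simp
  have noarc: "\<not> hom_arc m n (psi c) (psi d)" if c: "c < n" and d: "d < n" and cd: "c \<noteq> d" for c d
  proof
    assume h: "hom_arc m n (psi c) (psi d)"
    have m1: "1 < m" using m by simp
    have c01: "cyc_arc m 0 0" "cyc_arc m 0 1" "cyc_arc m 1 0" using m unfolding cyc_arc_def by auto
    have A1: "cyc_arc n (psi c 0) (psi d 0)" using h c01(1) m0 unfolding hom_arc_def by blast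
    then have A1: "cyc_arc n c d" using psi0[OF c] psi0[OF d] by simp
    have "cyc_arc n (psi c 0) (psi d 1)" using h c01(2) m0 m1 unfolding hom_arc_def by blast
    then have A2: "cyc_arc n c (pr n (int d + s))" using psi0[OF c] psi_val[OF m1, of d] by simp
    have "cyc_arc n (psi c 1) (psi d 0)" using h c01(3) m0 m1 unfolding hom_arc_def by blast
    then have A3: "cyc_arc n (pr n (int c + s)) d" using psi0[OF d] psi_val[OF m1, of c] by simp
    have lt: "pr n x < n" for x using pr_lt[OF n0] .
    have B1: "d = c \<or> d = nxt n c \<or> c = nxt n d"
      using A1 cyc_arc_if[OF c d] by simp
    from s1 show False
    proof
      assume s: "s = 1"
      have DC: "pr n (int d + s) = nxt n d" "pr n (int c + s) = nxt n c" unfolding s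
        using pr_plus1[OF d] pr_plus1[OF c] by simp_all
      have B2: "nxt n d = c \<or> nxt n d = nxt n c \<or> c = nxt n (nxt n d)"
        using A2 cyc_arc_if[OF c nxt_lt[OF d]] DC(1) by simp
      have B3: "d = nxt n c \<or> d = nxt n (nxt n c) \<or> nxt n c = nxt n d"
        using A3 cyc_arc_if[OF nxt_lt[OF c] d] DC(2) by simp
      show False by (rule contra1[OF n c d cd B1 B2 B3])
    next
      assume s: "s = -1"
      have DC: "pr n (int d + s) = prv n d" "pr n (int c + s) = prv n c" unfolding s
        using pr_minus1[OF d] pr_minus1[OF c] by simp_all
      have B2: "prv n d = c \<or> prv n d = nxt n c \<or> c = nxt n (prv n d)"
        using A2 cyc_arc_if[OF c prv_lt[OF d]] DC(1) by simp
      have B3: "d = prv n c \<or> d = nxt n (prv n c) \<or> prv n c = nxt n d"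
        using A3 cyc_arc_if[OF prv_lt[OF c] d] DC(2) by simp
      show False by (rule contra2[OF n c d cd B1 B2 B3])
    qed
  qed
  show ?thesis
  proof (intro conjI ballI impI card)
    fix \<phi> \<psi> assume phi: "\<phi> \<in> homs_w m n w" and psi: "\<psi> \<in> homs_w m n w" and ne: "\<phi> \<noteq> \<psi>"
    obtain c where c: "c < n" "\<phi> = psi c" using phi unfolding Seq by auto
    obtain d where d: "d < n" "\<psi> = psi d" using psi unfolding Seq by auto
    show "\<not> hom_arc m n \<phi> \<psi>" using noarc[OF c(1) d(1)] c d ne by auto
  qed
qed



theorem fact1p1:
  fixes m n :: nat and w :: int
  assumes "4 \<le> n" and "n \<le> m"
  shows "(\<bar>real_of_int w\<bar> < real m / real n \<longrightarrow>
            card (components (homs_w m n w) (hom_arc m n)) = 1)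
       \<and> (0 < \<bar>real_of_int w\<bar> \<and> \<bar>real_of_int w\<bar> = real m / real n \<longrightarrow>
            card (homs_w m n w) = n \<and>
            (\<forall>\<phi>\<in>homs_w m n w. \<forall>\<psi>\<in>homs_w m n w.
               \<phi> \<noteq> \<psi> \<longrightarrow> \<not> hom_arc m n \<phi> \<psi>))
       \<and> (real m / real n < \<bar>real_of_int w\<bar> \<longrightarrow> homs_w m n w = {})"
proof -
  have n4: "4 \<le> n" and n3: "3 \<le> n" and n0: "0 < n" and m2: "2 \<le> m" and m0: "0 < m" using assms by auto
  have rn: "real n > 0" using n0 by simp
  have conv: "real_of_int (\<bar>w * int n\<bar>) = \<bar>real_of_int w\<bar> * real n" by (simp add: abs_mult)
  have lt_iff: "\<bar>real_of_int w\<bar> < real m / real n \<longleftrightarrow> \<bar>w * int n\<bar> < int m"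
  proof -
    have "\<bar>real_of_int w\<bar> < real m / real n \<longleftrightarrow> \<bar>real_of_int w\<bar> * real n < real m"
      using rn by (simp add: pos_less_divide_eq)
    also have "\<dots> \<longleftrightarrow> real_of_int (\<bar>w * int n\<bar>) < real_of_int (int m)" using conv by simp
    also have "\<dots> \<longleftrightarrow> \<bar>w * int n\<bar> < int m" by (rule of_int_less_iff)
    finally show ?thesis .
  qed
  have gt_iff: "real m / real n < \<bar>real_of_int w\<bar> \<longleftrightarrow> int m < \<bar>w * int n\<bar>"
  proof -
    have "real m / real n < \<bar>real_of_int w\<bar> \<longleftrightarrow> real m < \<bar>real_of_int w\<bar> * real n"
      using rn by (simp add: pos_divide_less_eq)
    also have "\<dots> \<longleftrightarrow> real_of_int (int m) < real_of_int (\<bar>w * int n\<bar>)" using conv by simp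
    also have "\<dots> \<longleftrightarrow> int m < \<bar>w * int n\<bar>" by (rule of_int_less_iff)
    finally show ?thesis .
  qed
  have eq_iff: "\<bar>real_of_int w\<bar> = real m / real n \<longleftrightarrow> \<bar>w\<bar> * int n = int m"
  proof -
    have "\<bar>real_of_int w\<bar> = real m / real n \<longleftrightarrow> \<bar>real_of_int w\<bar> * real n = real m"
      using rn by (simp add: eq_divide_eq)
    also have "\<dots> \<longleftrightarrow> real_of_int (\<bar>w * int n\<bar>) = real_of_int (int m)" using conv by simp
    also have "\<dots> \<longleftrightarrow> \<bar>w\<bar> * int n = int m" by (simp only: of_int_eq_iff abs_mult) simp
    finally show ?thesis .
  qed
  have P1: "card (components (homs_w m n w) (hom_arc m n)) = 1" if h: "\<bar>w * int n\<bar> < int m"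
    by (rule comp_single[OF exists_hom[OF n3 m0 h]])
       (use all_connected[OF n3 m2 h] in blast)
  have P2: "card (homs_w m n w) = n \<and> (\<forall>\<phi>\<in>homs_w m n w. \<forall>\<psi>\<in>homs_w m n w. \<phi> \<noteq> \<psi> \<longrightarrow> \<not> hom_arc m n \<phi> \<psi>)"
    if h1: "0 < \<bar>real_of_int w\<bar>" and h2: "\<bar>w\<bar> * int n = int m"
    by (rule rigid[OF n4 m2 _ h2]) (use h1 in auto)
  have P3: "homs_w m n w = {}" if h: "int m < \<bar>w * int n\<bar>"
  proof (rule ccontr)
    assume "homs_w m n w \<noteq> {}"
    then obtain \<phi> where phi: "\<phi> \<in> homs_w m n w" by blast
    then have "increase m n \<phi> = w * int n" using wind_eq[OF n0] unfolding homs_w_def by auto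
    then show False using increase_bound[of m n \<phi>] h by simp
  qed
  show ?thesis using P1 P2 P3 lt_iff gt_iff eq_iff by blast
qed


end
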